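(* Let $L=2U\oplus A_2$. Then $\widetilde{\operatorname{O}}^+(L)$ acts transitively on the set of isotropic lines in $L\otimes\mathbb{Q}$ and transitively on the set of totally isotropic planes in $L\otimes\mathbb{Q}$. Thus the Tits' building $\mathcal{B}(\widetilde{\operatorname{O}}^+(L))$ consists of one line-node and one plane-node joined by one edge.
   Context: $U$ is the hyperbolic plane, $A_2$ the negative definite root lattice; $L$ has signature $(2,4)$. $\widetilde{\operatorname{O}}(L)$ is the kernel of $\operatorname{O}(L)\to\operatorname{O}(L^{\vee}/L)$; the real spinor norm of a product of reflections $\sigma_{w_1}\cdots\sigma_{w_m}$ is $\prod_i(-(w_i,w_i)/2)\in\mathbb{R}^*/(\mathbb{R}^* )^2$, and $\widetilde{\operatorname{O}}^+(L)$ is the subgroup of $\widetilde{\operatorname{O}}(L)$ of spinor norm $1$. For $G\subset\operatorname{O}^+(L\otimes\mathbb{Q})$, the Tits' building $\mathcal{B}(G)$ is the bipartite graph whose nodes are the $G$-orbits of isotropic lines and the $G$-orbits of totally isotropic planes in $L\otimes\mathbb{Q}$, with an edge between the orbit of a line $\ell$ and the orbit of a plane $\Pi$ iff $g\ell\subset\Pi$ for some $g\in G$. *)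

theory Defs
  imports "HOL-Analysis.Analysis"
begin

text \<open>The lattice L = 2U + A2 is realised as the integer points of real^6, with
  coordinates 0,1 spanning the first copy of U, 2,3 the second copy of U, and 4,5
  the (negative definite) A2.\<close>

definition bfL :: "real^6 \<Rightarrow> real^6 \<Rightarrow> real" where
  "bfL x y = x$0 * y$1 + x$1 * y$0 + x$2 * y$3 + x$3 * y$2
             - 2 * x$4 * y$4 + x$4 * y$5 + x$5 * y$4 - 2 * x$5 * y$5"

definition latL :: "(real^6) set" where
  "latL = {x. \<forall>i. x$i \<in> \<int>}"

definition ratL :: "(real^6) set" where
  "ratL = {x. \<forall>i. x$i \<in> \<rat>}"

definition dualL :: "(real^6) set" where
  "dualL = {v. \<forall>y\<in>latL. bfL v y \<in> \<int>}"

definition int_matrix :: "real^6^6 \<Rightarrow> bool" where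
  "int_matrix g \<longleftrightarrow> (\<forall>i j. g$i$j \<in> \<int>)"

definition OL :: "(real^6^6) set" where
  "OL = {g. int_matrix g \<and> (\<exists>h. int_matrix h \<and> g ** h = mat 1 \<and> h ** g = mat 1)
            \<and> (\<forall>x y. bfL (g *v x) (g *v y) = bfL x y)}"

definition OtildeL :: "(real^6^6) set" where
  "OtildeL = {g\<in>OL. \<forall>v\<in>dualL. g *v v - v \<in> latL}"

definition reflL :: "real^6 \<Rightarrow> real^6 \<Rightarrow> real^6" where
  "reflL w x = x - (2 * bfL x w / bfL w w) *\<^sub>R w"

text \<open>Real spinor norm 1: g is a product of reflections sigma_{w_1}...sigma_{w_m}
  with prod (-(w_i,w_i)/2) a positive real (i.e. trivial in R*/(R*)^2).\<close>
definition spinor_norm_one :: "real^6^6 \<Rightarrow> bool" where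
  "spinor_norm_one g \<longleftrightarrow> (\<exists>ws. (\<forall>w\<in>set ws. bfL w w \<noteq> 0)
       \<and> (\<forall>x. g *v x = foldr reflL ws x)
       \<and> prod_list (map (\<lambda>w. - bfL w w / 2) ws) > 0)"

definition OtildePlusL :: "(real^6^6) set" where
  "OtildePlusL = {g\<in>OtildeL. spinor_norm_one g}"

definition iso_line :: "(real^6) set \<Rightarrow> bool" where
  "iso_line l \<longleftrightarrow> (\<exists>v\<in>ratL. v \<noteq> 0 \<and> bfL v v = 0 \<and> l = {c *\<^sub>R v | c. c \<in> \<rat>})"

definition tot_iso_plane :: "(real^6) set \<Rightarrow> bool" where
  "tot_iso_plane P \<longleftrightarrow> (\<exists>v\<in>ratL. \<exists>w\<in>ratL.
      (\<forall>a\<in>\<rat>. \<forall>b\<in>\<rat>. a *\<^sub>R v + b *\<^sub>R w = 0 \<longrightarrow> a = 0 \<and> b = 0)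
      \<and> bfL v v = 0 \<and> bfL v w = 0 \<and> bfL w w = 0
      \<and> P = {a *\<^sub>R v + b *\<^sub>R w | a b. a \<in> \<rat> \<and> b \<in> \<rat>})"

definition act :: "real^6^6 \<Rightarrow> (real^6) set \<Rightarrow> (real^6) set" where
  "act g S = (\<lambda>x. g *v x) ` S"

definition orbitG :: "(real^6^6) set \<Rightarrow> (real^6) set \<Rightarrow> (real^6) set set" where
  "orbitG G S = {act g S | g. g \<in> G}"

definition line_nodes :: "(real^6^6) set \<Rightarrow> (real^6) set set set" where
  "line_nodes G = orbitG G ` {l. iso_line l}"

definition plane_nodes :: "(real^6^6) set \<Rightarrow> (real^6) set set set" where
  "plane_nodes G = orbitG G ` {P. tot_iso_plane P}"

definition building_edges :: "(real^6^6) set \<Rightarrow> ((real^6) set set \<times> (real^6) set set) set" where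
  "building_edges G = {(orbitG G l, orbitG G P) | l P.
      iso_line l \<and> tot_iso_plane P \<and> (\<exists>g\<in>G. act g l \<subseteq> P)}"

end

theory Submission
  imports Defs
begin

lemma ex6: "(i::6) = 0 \<or> i = 1 \<or> i = 2 \<or> i = 3 \<or> i = 4 \<or> i = 5"
proof -
  have "i \<in> (UNIV::6 set)" by simp
  also have "(UNIV::6 set) = {0,1,2,3,4,5}"
    by (rule card_subset_eq[symmetric]) (auto simp: card_insert_if)
  finally show ?thesis by auto
qed

lemma all6: "(\<forall>i::6. P i) \<longleftrightarrow> P 0 \<and> P 1 \<and> P 2 \<and> P 3 \<and> P 4 \<and> P 5"
proof (intro iffI allI)
  fix i :: 6 assume "P 0 \<and> P 1 \<and> P 2 \<and> P 3 \<and> P 4 \<and> P 5"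
  then show "P i" using ex6[of i] by auto
qed auto

lemma vec6_eq: "(x::real^6) = y \<longleftrightarrow> x$0=y$0 \<and> x$1=y$1 \<and> x$2=y$2 \<and> x$3=y$3 \<and> x$4=y$4 \<and> x$5=y$5"
  unfolding vec_eq_iff all6 ..

definition mk6 :: "real \<Rightarrow> real \<Rightarrow> real \<Rightarrow> real \<Rightarrow> real \<Rightarrow> real \<Rightarrow> real^6" where
  "mk6 a b c d e f = (\<chi> i. if i = 0 then a else if i = 1 then b else if i = 2 then c
      else if i = 3 then d else if i = 4 then e else f)"

lemma mk6_nth[simp]: "mk6 a b c d e f $ 0 = a" "mk6 a b c d e f $ 1 = b" "mk6 a b c d e f $ 2 = c"
  "mk6 a b c d e f $ 3 = d" "mk6 a b c d e f $ 4 = e" "mk6 a b c d e f $ 5 = f"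
  by (simp_all add: mk6_def)

lemma bfL_sym: "bfL x y = bfL y x"
  by (simp add: bfL_def algebra_simps)
lemma bfL_add_left: "bfL (x + y) z = bfL x z + bfL y z"
  by (simp add: bfL_def algebra_simps)
lemma bfL_add_right: "bfL z (x + y) = bfL z x + bfL z y"
  by (simp add: bfL_def algebra_simps)
lemma bfL_diff_left: "bfL (x - y) z = bfL x z - bfL y z"
  by (simp add: bfL_def algebra_simps)
lemma bfL_diff_right: "bfL z (x - y) = bfL z x - bfL z y"
  by (simp add: bfL_def algebra_simps)
lemma bfL_scale_left: "bfL (c *\<^sub>R x) z = c * bfL x z"
  by (simp add: bfL_def algebra_simps)
lemma bfL_scale_right: "bfL z (c *\<^sub>R x) = c * bfL z x"
  by (simp add: bfL_def algebra_simps)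
lemma bfL_neg_left: "bfL (- x) z = - bfL x z"
  by (simp add: bfL_def algebra_simps)
lemma bfL_neg_right: "bfL z (- x) = - bfL z x"
  by (simp add: bfL_def algebra_simps)
lemma bfL_zero[simp]: "bfL 0 z = 0" "bfL z 0 = 0"
  by (simp_all add: bfL_def)

lemmas bfL_lin = bfL_add_left bfL_add_right bfL_diff_left bfL_diff_right bfL_scale_left
  bfL_scale_right bfL_neg_left bfL_neg_right

lemma latL_iff: "x \<in> latL \<longleftrightarrow> x$0 \<in> \<int> \<and> x$1 \<in> \<int> \<and> x$2 \<in> \<int> \<and> x$3 \<in> \<int> \<and> x$4 \<in> \<int> \<and> x$5 \<in> \<int>"
  unfolding latL_def using all6[of "\<lambda>i. x$i \<in> \<int>"] by simp

lemma latL_add: "x \<in> latL \<Longrightarrow> y \<in> latL \<Longrightarrow> x + y \<in> latL"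
  by (auto simp: latL_def)
lemma latL_diff: "x \<in> latL \<Longrightarrow> y \<in> latL \<Longrightarrow> x - y \<in> latL"
  by (auto simp: latL_def)
lemma latL_neg: "x \<in> latL \<Longrightarrow> - x \<in> latL"
  by (auto simp: latL_def)
lemma latL_scale: "c \<in> \<int> \<Longrightarrow> x \<in> latL \<Longrightarrow> c *\<^sub>R x \<in> latL"
  by (auto simp: latL_def)
lemma latL_zero: "0 \<in> latL"
  by (auto simp: latL_def)

lemma bfL_int: "x \<in> latL \<Longrightarrow> y \<in> latL \<Longrightarrow> bfL x y \<in> \<int>"
  unfolding latL_iff bfL_def by (intro Ints_add Ints_diff Ints_mult; simp)

lemma bfL_even: "x \<in> latL \<Longrightarrow> bfL x x / 2 \<in> \<int>"
proof -
  assume "x \<in> latL"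
  hence h1: "x$0 * x$1 + x$2 * x$3 - x$4*x$4 + x$4*x$5 - x$5*x$5 \<in> \<int>"
    unfolding latL_iff by (intro Ints_add Ints_diff Ints_mult; simp)
  moreover have eq: "bfL x x / 2 = x$0 * x$1 + x$2 * x$3 - x$4*x$4 + x$4*x$5 - x$5*x$5"
    by (simp add: bfL_def field_simps)
  show ?thesis unfolding eq by (rule h1)
qed

lemma mk6_latL: "a \<in> \<int> \<Longrightarrow> b \<in> \<int> \<Longrightarrow> c \<in> \<int> \<Longrightarrow> d \<in> \<int> \<Longrightarrow> e \<in> \<int> \<Longrightarrow> f \<in> \<int>
   \<Longrightarrow> mk6 a b c d e f \<in> latL"
  by (simp add: latL_iff)

lemma dualL_bf: "v \<in> dualL \<Longrightarrow> y \<in> latL \<Longrightarrow> bfL v y \<in> \<int>"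
  by (simp add: dualL_def)

lemma latL_dualL: "x \<in> latL \<Longrightarrow> x \<in> dualL"
  by (simp add: dualL_def bfL_int)

lemma refl_w: "bfL w w \<noteq> 0 \<Longrightarrow> bfL (reflL w x) w = - bfL x w"
  unfolding reflL_def by (simp add: bfL_diff_left bfL_scale_left)

lemma refl_invol: "bfL w w \<noteq> 0 \<Longrightarrow> reflL w (reflL w x) = x"
proof -
  assume n: "bfL w w \<noteq> 0"
  have "reflL w (reflL w x) = reflL w x - (2 * (- bfL x w) / bfL w w) *\<^sub>R w"
    using refl_w[OF n] by (simp add: reflL_def)
  also have "\<dots> = x" by (simp add: reflL_def)
  finally show ?thesis .
qed

lemma refl_bf: "bfL w w \<noteq> 0 \<Longrightarrow> bfL (reflL w x) (reflL w y) = bfL x y"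
proof -
  assume n: "bfL w w \<noteq> 0"
  have "bfL (reflL w x) (reflL w y) = bfL (reflL w x) y - (2 * bfL y w / bfL w w) * bfL (reflL w x) w"
    by (simp add: reflL_def bfL_diff_right bfL_scale_right)
  also have "\<dots> = bfL x y"
    using n by (simp add: refl_w reflL_def bfL_diff_left bfL_scale_left bfL_sym[of y w])
  finally show ?thesis .
qed

lemma refl_linear: "linear (reflL w)"
  unfolding reflL_def
  by (rule linearI) (simp_all add: bfL_add_left bfL_scale_left algebra_simps add_divide_distrib)


definition nz :: "(real^6) list \<Rightarrow> bool" where
  "nz ws \<longleftrightarrow> (\<forall>w\<in>set ws. bfL w w \<noteq> 0)"

lemma foldr_rev_inv: "nz ws \<Longrightarrow> foldr reflL (rev ws) (foldr reflL ws x) = x"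
  by (induction ws arbitrary: x) (auto simp: nz_def refl_invol)

lemma foldr_inv_rev: "nz ws \<Longrightarrow> foldr reflL ws (foldr reflL (rev ws) x) = x"
  using foldr_rev_inv[of "rev ws" x] by (simp add: nz_def)

lemma foldr_bf: "nz ws \<Longrightarrow> bfL (foldr reflL ws x) (foldr reflL ws y) = bfL x y"
  by (induction ws) (auto simp: nz_def refl_bf)

lemma foldr_linear: "linear (foldr reflL ws)"
proof (induction ws)
  case Nil
  then show ?case using linear_id by (simp add: id_def)
next
  case (Cons w ws)
  have "foldr reflL (w # ws) = reflL w \<circ> foldr reflL ws" by (simp add: comp_def)
  then show ?case using Cons refl_linear linear_compose by metis
qed

definition good :: "(real^6) list \<Rightarrow> bool" where
  "good ws \<longleftrightarrow> nz ws \<and> prod_list (map (\<lambda>w. - bfL w w / 2) ws) > 0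
     \<and> (\<forall>x\<in>latL. foldr reflL ws x \<in> latL) \<and> (\<forall>x\<in>latL. foldr reflL (rev ws) x \<in> latL)
     \<and> (\<forall>v\<in>dualL. foldr reflL ws v - v \<in> latL)"

lemma good_nz: "good ws \<Longrightarrow> nz ws" by (simp add: good_def)

lemma good_dual: "good ws \<Longrightarrow> v \<in> dualL \<Longrightarrow> foldr reflL ws v \<in> dualL"
proof -
  assume g: "good ws" and v: "v \<in> dualL"
  have "bfL (foldr reflL ws v) y \<in> \<int>" if y: "y \<in> latL" for y
  proof -
    have "bfL (foldr reflL ws v) y = bfL (foldr reflL ws v) (foldr reflL ws (foldr reflL (rev ws) y))"
      using foldr_inv_rev[OF good_nz[OF g]] by simp
    also have "\<dots> = bfL v (foldr reflL (rev ws) y)" using foldr_bf[OF good_nz[OF g]] by simp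
    finally show ?thesis using v y g by (simp add: good_def dualL_def)
  qed
  then show ?thesis by (simp add: dualL_def)
qed

lemma good_Nil: "good []"
  by (simp add: good_def nz_def latL_zero)

lemma good_append: "good xs \<Longrightarrow> good ys \<Longrightarrow> good (xs @ ys)"
proof -
  assume gx: "good xs" and gy: "good ys"
  have d: "foldr reflL xs (foldr reflL ys v) - v \<in> latL" if v: "v \<in> dualL" for v
  proof -
    have e: "foldr reflL xs (foldr reflL ys v) - v
        = (foldr reflL xs (foldr reflL ys v) - foldr reflL ys v) + (foldr reflL ys v - v)" by simp
    have a: "foldr reflL xs (foldr reflL ys v) - foldr reflL ys v \<in> latL"
      using gx good_dual[OF gy v] unfolding good_def by blast
    have b: "foldr reflL ys v - v \<in> latL" using gy v unfolding good_def by blast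
    show ?thesis unfolding e by (rule latL_add[OF a b])
  qed
  have n: "nz (xs @ ys)" using gx gy by (auto simp: good_def nz_def)
  have p: "prod_list (map (\<lambda>w. - bfL w w / 2) (xs @ ys)) > 0"
    using gx gy by (simp add: good_def)
  have l1: "\<forall>x\<in>latL. foldr reflL (xs @ ys) x \<in> latL" using gx gy by (simp add: good_def)
  have l2: "\<forall>x\<in>latL. foldr reflL (rev (xs @ ys)) x \<in> latL" using gx gy by (simp add: good_def)
  show ?thesis unfolding good_def using n p l1 l2 d by simp
qed

lemma good_rev: "good ws \<Longrightarrow> good (rev ws)"
proof -
  assume g: "good ws"
  have n: "nz ws" using g by (simp add: good_def)
  have "foldr reflL (rev ws) v - v \<in> latL" if v: "v \<in> dualL" for v
  proof -
    let ?u = "foldr reflL (rev ws) v"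
    have ud: "?u \<in> dualL"
    proof -
      have "bfL ?u y \<in> \<int>" if y: "y \<in> latL" for y
      proof -
        have "bfL ?u y = bfL (foldr reflL ws ?u) (foldr reflL ws y)" using foldr_bf[OF n] by simp
        also have "\<dots> = bfL v (foldr reflL ws y)" using foldr_inv_rev[OF n] by simp
        moreover have "foldr reflL ws y \<in> latL" using g y unfolding good_def by blast
        ultimately show ?thesis using v by (simp add: dualL_def)
      qed
      then show ?thesis by (simp add: dualL_def)
    qed
    have "foldr reflL ws ?u - ?u \<in> latL" using g ud unfolding good_def by blast
    then have "- (foldr reflL ws ?u - ?u) \<in> latL" by (rule latL_neg)
    then show ?thesis using foldr_inv_rev[OF n] by simp
  qed
  moreover have "prod_list (map (\<lambda>w. - bfL w w / 2) (rev ws)) = prod_list (map (\<lambda>w. - bfL w w / 2) ws)"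
    by (simp only: rev_map[symmetric] prod_list.rev)
  moreover have "nz (rev ws)" using n by (simp add: nz_def)
  moreover have "\<forall>x\<in>latL. foldr reflL (rev ws) x \<in> latL" "\<forall>x\<in>latL. foldr reflL (rev (rev ws)) x \<in> latL"
    "prod_list (map (\<lambda>w. - bfL w w / 2) ws) > 0"
    using g unfolding good_def by auto
  ultimately show ?thesis unfolding good_def by simp
qed

lemma axis_latL: "axis j 1 \<in> latL"
  by (simp add: latL_def axis_def)

lemma good_matrix: "good ws \<Longrightarrow> matrix (foldr reflL ws) \<in> OtildePlusL"
proof -
  assume g: "good ws"
  have n: "nz ws" using g by (simp add: good_def)
  let ?f = "foldr reflL ws" and ?h = "foldr reflL (rev ws)"
  have lf: "linear ?f" and lh: "linear ?h" by (rule foldr_linear)+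
  have mf: "\<And>x. matrix ?f *v x = ?f x" using matrix_vector_mul(2)[OF lf] by simp
  have im: "int_matrix (matrix ?f)" "int_matrix (matrix ?h)"
    using g axis_latL by (auto simp: int_matrix_def matrix_def good_def latL_def)
  have c1: "?f \<circ> ?h = id" "?h \<circ> ?f = id"
    using foldr_inv_rev[OF n] foldr_rev_inv[OF n] by (auto simp: fun_eq_iff)
  have "matrix ?f ** matrix ?h = mat 1" "matrix ?h ** matrix ?f = mat 1"
    using matrix_compose[OF lh lf] matrix_compose[OF lf lh] c1 matrix_id_mat_1 by metis+
  then have "matrix ?f \<in> OL"
    using im mf foldr_bf[OF n] unfolding OL_def by auto
  moreover have "\<forall>v\<in>dualL. matrix ?f *v v - v \<in> latL" using g mf by (simp add: good_def)
  moreover have "spinor_norm_one (matrix ?f)"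
    unfolding spinor_norm_one_def using g mf by (auto simp: good_def nz_def)
  ultimately show ?thesis by (simp add: OtildePlusL_def OtildeL_def)
qed

lemma good_matrix_vec: "matrix (foldr reflL ws) *v x = foldr reflL ws x"
  using matrix_vector_mul(2)[OF foldr_linear] by simp


definition qf :: "real^6 \<Rightarrow> real" where "qf u = bfL u u / 2"

definition Eich :: "real^6 \<Rightarrow> real^6 \<Rightarrow> real^6 \<Rightarrow> real^6" where
  "Eich e u x = x - bfL u x *\<^sub>R e + bfL e x *\<^sub>R u - (qf u * bfL e x) *\<^sub>R e"

lemma refl_pair:
  assumes ee: "bfL e e = 0" and eu: "bfL e u = 0" and uu: "bfL u u \<noteq> 0"
  shows "reflL u (reflL (u + qf u *\<^sub>R e) x) = Eich e u x"
proof -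
  define a where "a = bfL x u"
  define b where "b = bfL x e"
  define n where "n = bfL u u"
  have n0: "n \<noteq> 0" using uu by (simp add: n_def)
  have q: "qf u = n / 2" by (simp add: qf_def n_def)
  have cc: "bfL (u + qf u *\<^sub>R e) (u + qf u *\<^sub>R e) = n"
    using ee eu by (simp add: bfL_lin bfL_sym[of u e] n_def)
  have xc: "bfL x (u + qf u *\<^sub>R e) = a + (n/2) * b"
    by (simp add: bfL_lin a_def b_def q)
  have y: "reflL (u + qf u *\<^sub>R e) x = x - (2*a/n + b) *\<^sub>R u - ((2*a/n + b) * (n/2)) *\<^sub>R e"
    unfolding reflL_def cc xc using n0 q by (simp add: algebra_simps add_divide_distrib)
  have yu: "bfL (x - (2*a/n + b) *\<^sub>R u - ((2*a/n + b) * (n/2)) *\<^sub>R e) u = - a - b * n"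
    using eu n0 by (simp add: bfL_lin a_def[symmetric] n_def[symmetric] field_simps)
  have "reflL u (reflL (u + qf u *\<^sub>R e) x) = reflL u (x - (2*a/n + b) *\<^sub>R u - ((2*a/n + b) * (n/2)) *\<^sub>R e)"
    by (simp only: y)
  also have "\<dots> = x - (2*a/n + b) *\<^sub>R u - ((2*a/n + b) * (n/2)) *\<^sub>R e - (2 * (- a - b * n) / n) *\<^sub>R u"
    unfolding reflL_def[of u] yu n_def[symmetric] ..
  also have "\<dots> = Eich e u x"
    unfolding Eich_def q using n0
    by (simp add: vec_eq_iff bfL_sym[of u x] bfL_sym[of e x] a_def[symmetric] b_def[symmetric] field_simps)
  finally show ?thesis .
qed

lemma qf_int: "u \<in> latL \<Longrightarrow> qf u \<in> \<int>"
  by (simp add: qf_def bfL_even)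

lemma Eich_lat: "e \<in> latL \<Longrightarrow> u \<in> latL \<Longrightarrow> x \<in> latL \<Longrightarrow> Eich e u x \<in> latL"
  unfolding Eich_def
  by (intro latL_add latL_diff latL_scale Ints_mult bfL_int qf_int; assumption?)

lemma Eich_dual: "e \<in> latL \<Longrightarrow> u \<in> latL \<Longrightarrow> v \<in> dualL \<Longrightarrow> Eich e u v - v \<in> latL"
proof -
  assume e: "e \<in> latL" and u: "u \<in> latL" and v: "v \<in> dualL"
  have "Eich e u v - v = bfL e v *\<^sub>R u - bfL u v *\<^sub>R e - (qf u * bfL e v) *\<^sub>R e"
    by (simp add: Eich_def algebra_simps)
  moreover have "bfL e v \<in> \<int>" "bfL u v \<in> \<int>"
    using dualL_bf[OF v e] dualL_bf[OF v u] by (simp_all add: bfL_sym[of _ v])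
  ultimately show ?thesis
    by (simp only:) (intro latL_add latL_diff latL_scale Ints_mult qf_int e u; assumption)
qed

lemma Eich_comp:
  assumes ee: "bfL e e = 0" and e1: "bfL e u1 = 0" and e2: "bfL e u2 = 0"
  shows "Eich e u1 (Eich e u2 x) = Eich e (u1 + u2) x"
proof -
  have q: "qf (u1 + u2) = qf u1 + qf u2 + bfL u1 u2"
    by (simp add: qf_def bfL_lin bfL_sym[of u2 u1] field_simps)
  have s1: "bfL u1 e = 0" using e1 by (simp add: bfL_sym[of u1 e])
  have ey: "bfL e (Eich e u2 x) = bfL e x"
    unfolding Eich_def using ee e2 by (simp add: bfL_lin)
  have uy: "bfL u1 (Eich e u2 x) = bfL u1 x + bfL e x * bfL u1 u2"
    unfolding Eich_def using s1 by (simp add: bfL_lin)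
  have "Eich e u1 (Eich e u2 x) = Eich e u2 x - (bfL u1 x + bfL e x * bfL u1 u2) *\<^sub>R e
      + bfL e x *\<^sub>R u1 - (qf u1 * bfL e x) *\<^sub>R e"
    unfolding Eich_def[of e u1] ey uy ..
  also have "\<dots> = Eich e (u1 + u2) x"
    unfolding Eich_def q bfL_add_left by (simp add: vec_eq_iff algebra_simps)
  finally show ?thesis .
qed

lemma good_eich:
  assumes e: "e \<in> latL" and u: "u \<in> latL" and ee: "bfL e e = 0" and eu: "bfL e u = 0"
    and q0: "qf u \<noteq> 0"
  shows "good [u, u + qf u *\<^sub>R e] \<and> (\<forall>x. foldr reflL [u, u + qf u *\<^sub>R e] x = Eich e u x)"
proof -
  have uu: "bfL u u \<noteq> 0" using q0 by (simp add: qf_def)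
  let ?c = "u + qf u *\<^sub>R e"
  have cc: "bfL ?c ?c = bfL u u" using ee eu by (simp add: bfL_lin bfL_sym[of u e])
  have c: "?c \<in> latL" by (intro latL_add latL_scale qf_int u e)
  have f: "\<forall>x. foldr reflL [u, ?c] x = Eich e u x" using refl_pair[OF ee eu uu] by simp
  have me: "- e \<in> latL" by (rule latL_neg[OF e])
  have ee2: "bfL (- e) (- e) = 0" using ee by (simp add: bfL_lin)
  have ec: "bfL (- e) ?c = 0" using ee eu by (simp add: bfL_lin)
  have qc: "qf ?c = qf u" using cc by (simp only: qf_def[of "u + qf u *\<^sub>R e"] cc) (simp add: qf_def)
  have hback: "?c + qf ?c *\<^sub>R (- e) = u" by (simp add: qc)
  have r: "\<forall>x. foldr reflL (rev [u, ?c]) x = Eich (- e) ?c x"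
  proof
    fix x
    have "reflL ?c (reflL (?c + qf ?c *\<^sub>R (- e)) x) = Eich (- e) ?c x"
      by (rule refl_pair[OF ee2 ec]) (simp add: cc uu)
    then show "foldr reflL (rev [u, ?c]) x = Eich (- e) ?c x" unfolding hback by simp
  qed
  show ?thesis
  proof (intro conjI f)
    show "good [u, ?c]" unfolding good_def
    proof (intro conjI ballI)
      show "nz [u, ?c]" using uu cc by (simp add: nz_def)
      show "0 < prod_list (map (\<lambda>w. - bfL w w / 2) [u, ?c])" using cc uu by (auto simp: zero_less_mult_iff)
    next
      fix x assume x: "x \<in> latL"
      show "foldr reflL [u, ?c] x \<in> latL" using f Eich_lat[OF e u x] by simp
      show "foldr reflL (rev [u, ?c]) x \<in> latL" using r Eich_lat[OF me c x] by simp
    next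
      fix v assume "v \<in> dualL"
      then show "foldr reflL [u, ?c] v - v \<in> latL" using f Eich_dual[OF e u] by simp
    qed
  qed
qed


lemma good_root:
  assumes r: "r \<in> latL" and rr: "bfL r r = -2"
  shows "good [r] \<and> (\<forall>x. foldr reflL [r] x = x + bfL x r *\<^sub>R r)"
proof -
  have f: "\<forall>x. foldr reflL [r] x = x + bfL x r *\<^sub>R r" by (simp add: reflL_def rr)
  show ?thesis
  proof (intro conjI f)
    show "good [r]" unfolding good_def
    proof (intro conjI ballI)
      show "nz [r]" using rr by (simp add: nz_def)
      show "0 < prod_list (map (\<lambda>w. - bfL w w / 2) [r])" using rr by simp
    next
      fix x assume x: "x \<in> latL"
      show "foldr reflL [r] x \<in> latL" using f x r by (simp add: latL_add latL_scale bfL_int)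
      show "foldr reflL (rev [r]) x \<in> latL" using f x r by (simp add: latL_add latL_scale bfL_int)
    next
      fix v assume "v \<in> dualL"
      then show "foldr reflL [r] v - v \<in> latL" using f r by (simp add: latL_scale dualL_bf)
    qed
  qed
qed

lemma good_eich2:
  assumes e: "e \<in> latL" and u: "u \<in> latL" and ee: "bfL e e = 0" and eu: "bfL e u = 0"
    and a: "a \<in> latL" and ea: "bfL e a = 0" and q1: "qf (u + a) \<noteq> 0" and q2: "qf (- a) \<noteq> 0"
  shows "\<exists>ws. good ws \<and> (\<forall>x. foldr reflL ws x = Eich e u x)"
proof -
  have ua: "u + a \<in> latL" "- a \<in> latL" using u a by (simp_all add: latL_add latL_neg)
  have eua: "bfL e (u + a) = 0" "bfL e (- a) = 0" using eu ea by (simp_all add: bfL_lin)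
  obtain ws1 where w1: "good ws1" "\<forall>x. foldr reflL ws1 x = Eich e (u + a) x"
    using good_eich[OF e ua(1) ee eua(1) q1] by blast
  obtain ws2 where w2: "good ws2" "\<forall>x. foldr reflL ws2 x = Eich e (- a) x"
    using good_eich[OF e ua(2) ee eua(2) q2] by blast
  have "\<forall>x. foldr reflL (ws1 @ ws2) x = Eich e u x"
    using w1 w2 Eich_comp[OF ee eua] by simp
  then show ?thesis using good_append[OF w1(1) w2(1)] by blast
qed

abbreviation iv :: "int \<Rightarrow> int \<Rightarrow> int \<Rightarrow> int \<Rightarrow> int \<Rightarrow> int \<Rightarrow> real^6" where
  "iv a b c d e f \<equiv> mk6 (of_int a) (of_int b) (of_int c) (of_int d) (of_int e) (of_int f)"

lemma iv_latL: "iv a b c d e f \<in> latL"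
  by (simp add: latL_iff)

lemma bf_iv: "bfL (iv a b c d e f) (iv a' b' c' d' e' f') =
   of_int (a*b' + b*a' + c*d' + d*c' - 2*e*e' + e*f' + f*e' - 2*f*f')"
  by (simp add: bfL_def)

lemma good_eich_gen:
  assumes e: "e \<in> latL" and u: "u \<in> latL" and ee: "bfL e e = 0" and eu: "bfL e u = 0"
    and e4: "bfL e (iv 0 0 0 0 1 0) = 0"
  shows "\<exists>ws. good ws \<and> (\<forall>x. foldr reflL ws x = Eich e u x)"
proof (cases "qf u = 0")
  case False
  then show ?thesis using good_eich[OF e u ee eu] by blast
next
  case True
  define a4 where "a4 = iv 0 0 0 0 1 0"
  have aa: "bfL a4 a4 = -2" by (simp add: a4_def bfL_def)
  have au: "bfL a4 u = bfL u a4" by (rule bfL_sym)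
  have qa: "qf (t *\<^sub>R a4) = - t*t" for t by (simp add: qf_def bfL_lin aa)
  have qua: "qf (u + t *\<^sub>R a4) = t * bfL u a4 - t*t" for t
    using True by (simp add: qf_def bfL_lin au aa field_simps)
  have lat: "t *\<^sub>R a4 \<in> latL" if "t \<in> \<int>" for t unfolding a4_def by (rule latL_scale[OF that iv_latL])
  have ea: "bfL e (t *\<^sub>R a4) = 0" for t using e4 by (simp add: bfL_lin a4_def)
  show ?thesis
  proof (cases "bfL u a4 = 1")
    case True
    have "qf (u + 2 *\<^sub>R a4) \<noteq> 0" "qf (- (2 *\<^sub>R a4)) \<noteq> 0"
      using qua[of 2] True qa[of "-2"] by simp_all
    then show ?thesis using good_eich2[OF e u ee eu lat[of 2] ea[of 2]] by simp
  next
    case False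
    have "qf (u + 1 *\<^sub>R a4) \<noteq> 0" "qf (- (1 *\<^sub>R a4)) \<noteq> 0"
      using qua[of 1] False qa[of "-1"] by simp_all
    then show ?thesis using good_eich2[OF e u ee eu lat[of 1] ea[of 1]] by simp
  qed
qed


lemma op_swap01: "good [iv 1 (-1) 0 0 0 0] \<and> (\<forall>a b c d e f. foldr reflL [iv 1 (-1) 0 0 0 0] (iv a b c d e f) = iv b a c d e f)"
proof -
  have g: "good [iv 1 (-1) 0 0 0 0] \<and> (\<forall>x. foldr reflL [iv 1 (-1) 0 0 0 0] x = x + bfL x (iv 1 (-1) 0 0 0 0) *\<^sub>R iv 1 (-1) 0 0 0 0)"
    by (rule good_root[OF iv_latL]) (simp add: bfL_def)
  show ?thesis using g by (simp add: vec6_eq bfL_def)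
qed

lemma op_swap23: "good [iv 0 0 1 (-1) 0 0] \<and> (\<forall>a b c d e f. foldr reflL [iv 0 0 1 (-1) 0 0] (iv a b c d e f) = iv a b d c e f)"
proof -
  have g: "good [iv 0 0 1 (-1) 0 0] \<and> (\<forall>x. foldr reflL [iv 0 0 1 (-1) 0 0] x = x + bfL x (iv 0 0 1 (-1) 0 0) *\<^sub>R iv 0 0 1 (-1) 0 0)"
    by (rule good_root[OF iv_latL]) (simp add: bfL_def)
  show ?thesis using g by (simp add: vec6_eq bfL_def)
qed

lemma op_E0: "\<exists>ws. good ws \<and> (\<forall>a b c d e f. foldr reflL ws (iv a b c d e f) =
   iv (a - (K2*d + K3*c - 2*K4*e + K4*f + K5*e - 2*K5*f) - (K2*K3 - K4*K4 + K4*K5 - K5*K5)*b) b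
      (c + b*K2) (d + b*K3) (e + b*K4) (f + b*K5))"
proof -
  obtain ws where w: "good ws" "\<forall>x. foldr reflL ws x = Eich (iv 1 0 0 0 0 0) (iv 0 0 K2 K3 K4 K5) x"
  proof -
    have "\<exists>ws. good ws \<and> (\<forall>x. foldr reflL ws x = Eich (iv 1 0 0 0 0 0) (iv 0 0 K2 K3 K4 K5) x)"
      by (rule good_eich_gen) (simp_all only: iv_latL, simp_all add: bfL_def)
    then show ?thesis using that by blast
  qed
  show ?thesis
    by (rule exI[of _ ws]) (simp add: w vec6_eq Eich_def qf_def bfL_def field_simps)
qed


lemma op_E1: "\<exists>ws. good ws \<and> (\<forall>a b c d e f. foldr reflL ws (iv a b c d e f) =
   iv a (b - K*d) (c + a*K) d e f)"
proof -
  obtain ws where w: "good ws" "\<forall>x. foldr reflL ws x = Eich (iv 0 1 0 0 0 0) (iv 0 0 K 0 0 0) x"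
  proof -
    have "\<exists>ws. good ws \<and> (\<forall>x. foldr reflL ws x = Eich (iv 0 1 0 0 0 0) (iv 0 0 K 0 0 0) x)"
      by (rule good_eich_gen) (simp_all only: iv_latL, simp_all add: bfL_def)
    then show ?thesis using that by blast
  qed
  show ?thesis
    by (rule exI[of _ ws]) (simp add: w vec6_eq Eich_def qf_def bfL_def field_simps)
qed

lemma op_E2: "\<exists>ws. good ws \<and> foldr reflL ws (iv 1 0 0 0 0 0) = iv 1 0 0 0 0 0 \<and>
  (\<forall>a b c d e f. foldr reflL ws (iv a b c d e f) =
   iv a b (c - (-2*K4*e + K4*f + K5*e - 2*K5*f) - (-K4*K4 + K4*K5 - K5*K5)*d) d (e + d*K4) (f + d*K5))"
proof -
  obtain ws where w: "good ws" "\<forall>x. foldr reflL ws x = Eich (iv 0 0 1 0 0 0) (iv 0 0 0 0 K4 K5) x"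
  proof -
    have "\<exists>ws. good ws \<and> (\<forall>x. foldr reflL ws x = Eich (iv 0 0 1 0 0 0) (iv 0 0 0 0 K4 K5) x)"
      by (rule good_eich_gen) (simp_all only: iv_latL, simp_all add: bfL_def)
    then show ?thesis using that by blast
  qed
  show ?thesis
    by (rule exI[of _ ws]) (simp add: w vec6_eq Eich_def qf_def bfL_def field_simps)
qed

lemma swap23_E0: "foldr reflL [iv 0 0 1 (-1) 0 0] (iv 1 0 0 0 0 0) = iv 1 0 0 0 0 0"
  using op_swap23 by (metis of_int_0 of_int_1)


lemma int_sq_bound:
  fixes A B M :: int
  assumes "0 \<le> A" "0 \<le> B" "A < M" "B < M"
  shows "0 \<le> A*B \<and> A*B < M*M \<and> A*A - A*B + B*B < M*M"
proof -
  have ab: "A*B < M*M" using assms by (simp add: mult_strict_mono)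
  have aa: "A*A < M*M" "B*B < M*M" using assms by (simp_all add: mult_strict_mono)
  have "A*A - A*B + B*B < M*M"
  proof (cases "B \<le> A")
    case True
    then have "B*B \<le> A*B" using assms by (simp add: mult_right_mono)
    then show ?thesis using aa by linarith
  next
    case False
    then have "A*A \<le> A*B" using assms by (simp add: mult_left_mono)
    then show ?thesis using aa by linarith
  qed
  then show ?thesis using ab assms by simp
qed

lemma modpair:
  fixes n y z :: int
  assumes n: "n \<noteq> 0"
  shows "0 \<le> (y mod n)*(z mod n) \<and> (y mod n)*(z mod n) < n*n
     \<and> (y mod n)*(y mod n) - (y mod n)*(z mod n) + (z mod n)*(z mod n) < n*n"
proof (cases "n > 0")
  case True
  then show ?thesis using int_sq_bound[of "y mod n" "z mod n" n] by simp
next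
  case False
  then have n0: "n < 0" using n by simp
  have h: "0 \<le> -(y mod n)" "0 \<le> -(z mod n)" "-(y mod n) < -n" "-(z mod n) < -n"
    using n0 neg_mod_sign[OF n0] neg_mod_bound[OF n0] by (simp_all add: neg_mod_sign neg_mod_bound)
  show ?thesis using int_sq_bound[OF h] by simp
qed

lemma eis_nonneg: "0 \<le> (a::int)*a - a*b + b*b"
proof -
  have "2*(a*a - a*b + b*b) = (a-b)*(a-b) + a*a + b*b" by (simp add: algebra_simps)
  moreover have "0 \<le> (a-b)*(a-b)" "0 \<le> a*a" "0 \<le> b*b" by simp_all
  ultimately show ?thesis by (smt (verit))
qed

lemma eis_zero: "(a::int)*a - a*b + b*b = 0 \<Longrightarrow> a = 0 \<and> b = 0"
proof -
  assume h: "a*a - a*b + b*b = 0"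
  have "2*(a*a - a*b + b*b) = (a-b)*(a-b) + a*a + b*b" by (simp add: algebra_simps)
  moreover have "0 \<le> (a-b)*(a-b)" "0 \<le> a*a" "0 \<le> b*b" by simp_all
  ultimately have "a*a = 0" "b*b = 0" using h by (smt (verit))+
  then show ?thesis by simp
qed

lemma abs_lt_of_prod:
  fixes c n p :: int
  assumes "c * n = p" "0 \<le> p" "p < n*n" "n \<noteq> 0"
  shows "\<bar>c\<bar> < \<bar>n\<bar>"
proof -
  have "\<bar>c\<bar> * \<bar>n\<bar> < \<bar>n\<bar> * \<bar>n\<bar>" using assms by (simp add: abs_mult[symmetric] abs_mult_self_eq)
  then show ?thesis by (rule mult_right_less_imp_less) simp
qed

lemma abs_lt_of_prod2:
  fixes c n p :: int
  assumes "c * n = p" "\<bar>p\<bar> < n*n" "n \<noteq> 0"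
  shows "\<bar>c\<bar> < \<bar>n\<bar>"
proof -
  have "\<bar>c\<bar> * \<bar>n\<bar> < \<bar>n\<bar> * \<bar>n\<bar>" using assms by (simp add: abs_mult[symmetric] abs_mult_self_eq)
  then show ?thesis by (rule mult_right_less_imp_less) simp
qed

lemma good_foldr_bf: "good ws \<Longrightarrow> bfL (foldr reflL ws x) (foldr reflL ws x) = bfL x x"
  using foldr_bf good_nz by blast


lemma descM:
  "nat \<bar>X3\<bar> < N \<Longrightarrow> X2*X3 = X4*X4 - X4*X5 + X5*X5 \<Longrightarrow>
   \<exists>ws X2'. good ws \<and> foldr reflL ws (iv 1 0 0 0 0 0) = iv 1 0 0 0 0 0 \<and>
     foldr reflL ws (iv X0 X1 X2 X3 X4 X5) = iv X0 X1 X2' 0 0 0"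
proof (induction N arbitrary: X2 X3 X4 X5)
  case 0
  then show ?case by simp
next
  case (Suc N)
  show ?case
  proof (cases "X3 = 0")
    case True
    then have "X4*X4 - X4*X5 + X5*X5 = 0" using Suc.prems(2) by simp
    then have "X4 = 0 \<and> X5 = 0" by (rule eis_zero)
    then show ?thesis using True good_Nil by (intro exI[of _ "[]"] exI[of _ X2]) simp
  next
    case False
    define a where "a = X4 mod X3"
    define b where "b = X5 mod X3"
    obtain ws1 where w1: "good ws1" "foldr reflL ws1 (iv 1 0 0 0 0 0) = iv 1 0 0 0 0 0"
      "\<And>a b c d e f. foldr reflL ws1 (iv a b c d e f) =
       iv a b (c - (-2*(-(X4 div X3))*e + (-(X4 div X3))*f + (-(X5 div X3))*e - 2*(-(X5 div X3))*f)
         - (-(-(X4 div X3))*(-(X4 div X3)) + (-(X4 div X3))*(-(X5 div X3)) - (-(X5 div X3))*(-(X5 div X3)))*d)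
         d (e + d*(-(X4 div X3))) (f + d*(-(X5 div X3)))"
      using op_E2[of "-(X4 div X3)" "-(X5 div X3)"] by blast
    define C where "C = X2 - (-2*(-(X4 div X3))*X4 + (-(X4 div X3))*X5 + (-(X5 div X3))*X4 - 2*(-(X5 div X3))*X5)
         - (-(-(X4 div X3))*(-(X4 div X3)) + (-(X4 div X3))*(-(X5 div X3)) - (-(X5 div X3))*(-(X5 div X3)))*X3"
    have e4: "X4 + X3*(-(X4 div X3)) = a" unfolding a_def by (simp add: minus_mult_div_eq_mod[symmetric] algebra_simps)
    have e5: "X5 + X3*(-(X5 div X3)) = b" unfolding b_def by (simp add: minus_mult_div_eq_mod[symmetric] algebra_simps)
    have y1: "foldr reflL ws1 (iv X0 X1 X2 X3 X4 X5) = iv X0 X1 C X3 a b"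
      unfolding w1(3) C_def e4[symmetric] e5[symmetric] ..
    have "bfL (iv X0 X1 C X3 a b) (iv X0 X1 C X3 a b) = bfL (iv X0 X1 X2 X3 X4 X5) (iv X0 X1 X2 X3 X4 X5)"
      using good_foldr_bf[OF w1(1)] y1 by metis
    then have "X0*X1 + X1*X0 + C*X3 + X3*C - 2*a*a + a*b + b*a - 2*b*b
        = X0*X1 + X1*X0 + X2*X3 + X3*X2 - 2*X4*X4 + X4*X5 + X5*X4 - 2*X5*X5"
      unfolding bf_iv of_int_eq_iff .
    then have iso: "C*X3 = a*a - a*b + b*b" using Suc.prems(2) by (simp add: algebra_simps)
    have mp: "a*a - a*b + b*b < X3*X3" using modpair[OF False, of X4 X5] by (simp add: a_def b_def)
    have lt: "\<bar>C\<bar> < \<bar>X3\<bar>" by (rule abs_lt_of_prod[OF iso eis_nonneg mp False])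
    have sw: "foldr reflL [iv 0 0 1 (-1) 0 0] (iv X0 X1 C X3 a b) = iv X0 X1 X3 C a b"
      using op_swap23 by blast
    have "nat \<bar>C\<bar> < N" using lt Suc.prems(1) by linarith
    moreover have "X3*C = a*a - a*b + b*b" using iso by (simp add: mult.commute)
    ultimately obtain ws3 X2' where w3: "good ws3" "foldr reflL ws3 (iv 1 0 0 0 0 0) = iv 1 0 0 0 0 0"
      "foldr reflL ws3 (iv X0 X1 X3 C a b) = iv X0 X1 X2' 0 0 0"
      using Suc.IH by blast
    let ?ws = "ws3 @ [iv 0 0 1 (-1) 0 0] @ ws1"
    have "good ?ws" using w3(1) op_swap23 w1(1) by (intro good_append) auto
    moreover have "foldr reflL ?ws (iv 1 0 0 0 0 0) = iv 1 0 0 0 0 0"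
      using w1(2) swap23_E0 w3(2) by simp
    moreover have "foldr reflL ?ws (iv X0 X1 X2 X3 X4 X5) = iv X0 X1 X2' 0 0 0"
      using y1 sw w3(3) by simp
    ultimately show ?thesis by blast
  qed
qed


lemma descL:
  "nat \<bar>X1\<bar> < N \<Longrightarrow> X0*X1 + X2*X3 - X4*X4 + X4*X5 - X5*X5 = 0 \<Longrightarrow>
   \<exists>ws Y0 Y2 Y3 Y4 Y5. good ws \<and> foldr reflL ws (iv X0 X1 X2 X3 X4 X5) = iv Y0 0 Y2 Y3 Y4 Y5"
proof (induction N arbitrary: X0 X1 X2 X3 X4 X5)
  case 0
  then show ?case by simp
next
  case (Suc N)
  show ?case
  proof (cases "X1 = 0")
    case True
    then show ?thesis using good_Nil
      by (intro exI[of _ "[]"] exI[of _ X0] exI[of _ X2] exI[of _ X3] exI[of _ X4] exI[of _ X5]) auto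
  next
    case False
    define a2 where "a2 = X2 mod X1"
    define a3 where "a3 = X3 mod X1"
    define a4 where "a4 = X4 mod X1"
    define a5 where "a5 = X5 mod X1"
    define K2 where "K2 = -(X2 div X1)"
    define K3 where "K3 = -(X3 div X1)"
    define K4 where "K4 = -(X4 div X1)"
    define K5 where "K5 = -(X5 div X1)"
    obtain ws1 where w1: "good ws1"
      "\<And>a b c d e f. foldr reflL ws1 (iv a b c d e f) =
   iv (a - (K2*d + K3*c - 2*K4*e + K4*f + K5*e - 2*K5*f) - (K2*K3 - K4*K4 + K4*K5 - K5*K5)*b) b
      (c + b*K2) (d + b*K3) (e + b*K4) (f + b*K5)"
      using op_E0[of K2 K3 K4 K5] by blast
    define A where "A = X0 - (K2*X3 + K3*X2 - 2*K4*X4 + K4*X5 + K5*X4 - 2*K5*X5) - (K2*K3 - K4*K4 + K4*K5 - K5*K5)*X1"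
    have e2: "X2 + X1*K2 = a2" unfolding a2_def K2_def by (simp add: minus_mult_div_eq_mod[symmetric] algebra_simps)
    have e3: "X3 + X1*K3 = a3" unfolding a3_def K3_def by (simp add: minus_mult_div_eq_mod[symmetric] algebra_simps)
    have e4: "X4 + X1*K4 = a4" unfolding a4_def K4_def by (simp add: minus_mult_div_eq_mod[symmetric] algebra_simps)
    have e5: "X5 + X1*K5 = a5" unfolding a5_def K5_def by (simp add: minus_mult_div_eq_mod[symmetric] algebra_simps)
    have y1: "foldr reflL ws1 (iv X0 X1 X2 X3 X4 X5) = iv A X1 a2 a3 a4 a5"
      unfolding w1(2) A_def e2[symmetric] e3[symmetric] e4[symmetric] e5[symmetric] ..
    have "bfL (iv A X1 a2 a3 a4 a5) (iv A X1 a2 a3 a4 a5) = bfL (iv X0 X1 X2 X3 X4 X5) (iv X0 X1 X2 X3 X4 X5)"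
      using good_foldr_bf[OF w1(1)] y1 by metis
    then have "A*X1 + X1*A + a2*a3 + a3*a2 - 2*a4*a4 + a4*a5 + a5*a4 - 2*a5*a5
        = X0*X1 + X1*X0 + X2*X3 + X3*X2 - 2*X4*X4 + X4*X5 + X5*X4 - 2*X5*X5"
      unfolding bf_iv of_int_eq_iff .
    then have iso: "A*X1 = (a4*a4 - a4*a5 + a5*a5) - a2*a3" using Suc.prems(2) by (simp add: algebra_simps)
    have m1: "0 \<le> a2*a3 \<and> a2*a3 < X1*X1" using modpair[OF False, of X2 X3] by (simp add: a2_def a3_def)
    have m2: "a4*a4 - a4*a5 + a5*a5 < X1*X1" using modpair[OF False, of X4 X5] by (simp add: a4_def a5_def)
    have m3: "0 \<le> a4*a4 - a4*a5 + a5*a5" by (rule eis_nonneg)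
    have "\<bar>(a4*a4 - a4*a5 + a5*a5) - a2*a3\<bar> < X1*X1" using m1 m2 m3 by linarith
    then have lt: "\<bar>A\<bar> < \<bar>X1\<bar>" by (rule abs_lt_of_prod2[OF iso _ False])
    have sw: "foldr reflL [iv 1 (-1) 0 0 0 0] (iv A X1 a2 a3 a4 a5) = iv X1 A a2 a3 a4 a5"
      using op_swap01 by blast
    have "nat \<bar>A\<bar> < N" using lt Suc.prems(1) by linarith
    moreover have "X1*A + a2*a3 - a4*a4 + a4*a5 - a5*a5 = 0" using iso by (simp add: algebra_simps)
    ultimately obtain ws3 Y0 Y2 Y3 Y4 Y5 where w3: "good ws3"
      "foldr reflL ws3 (iv X1 A a2 a3 a4 a5) = iv Y0 0 Y2 Y3 Y4 Y5"
      using Suc.IH by blast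
    let ?ws = "ws3 @ [iv 1 (-1) 0 0 0 0] @ ws1"
    have "good ?ws" using w3(1) op_swap01 w1(1) by (intro good_append) auto
    moreover have "foldr reflL ?ws (iv X0 X1 X2 X3 X4 X5) = iv Y0 0 Y2 Y3 Y4 Y5"
      using y1 sw w3(2) by simp
    ultimately show ?thesis by blast
  qed
qed

lemma euclid:
  "nat \<bar>c\<bar> < N \<Longrightarrow> \<exists>ws g. good ws \<and> foldr reflL ws (iv a 0 c 0 0 0) = iv g 0 0 0 0 0"
proof (induction N arbitrary: a c)
  case 0
  then show ?case by simp
next
  case (Suc N)
  have opB: "\<exists>ws. good ws \<and> (\<forall>a c. foldr reflL ws (iv a 0 c 0 0 0) = iv (a - K*c) 0 c 0 0 0)" for K
  proof -
    obtain ws where w: "good ws" "\<And>a b c d e f. foldr reflL ws (iv a b c d e f) =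
      iv (a - (0*d + K*c - 2*0*e + 0*f + 0*e - 2*0*f) - (0*K - 0*0 + 0*0 - 0*0)*b) b
      (c + b*0) (d + b*K) (e + b*0) (f + b*0)"
      using op_E0[of 0 K 0 0] by blast
    show ?thesis
    proof (intro exI[of _ ws] conjI allI)
      fix a c
      show "foldr reflL ws (iv a 0 c 0 0 0) = iv (a - K*c) 0 c 0 0 0"
        using w(2)[of a 0 c 0 0 0] by simp
    qed (rule w(1))
  qed
  have opC: "\<exists>ws. good ws \<and> (\<forall>a c. foldr reflL ws (iv a 0 c 0 0 0) = iv a 0 (c + a*K) 0 0 0)" for K
  proof -
    obtain ws where w: "good ws" "\<And>a b c d e f. foldr reflL ws (iv a b c d e f) = iv a (b - K*d) (c + a*K) d e f"
      using op_E1[of K] by blast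
    show ?thesis
    proof (intro exI[of _ ws] conjI allI)
      fix a c
      show "foldr reflL ws (iv a 0 c 0 0 0) = iv a 0 (c + a*K) 0 0 0"
        using w(2)[of a 0 c 0 0 0] by simp
    qed (rule w(1))
  qed
  show ?case
  proof (cases "c = 0")
    case True
    then show ?thesis using good_Nil by (intro exI[of _ "[]"] exI[of _ a]) simp
  next
    case False
    obtain wsB where wB: "good wsB" "\<And>x y. foldr reflL wsB (iv x 0 y 0 0 0) = iv (x - (a div c)*y) 0 y 0 0 0"
      using opB[of "a div c"] by blast
    have am: "a - (a div c)*c = a mod c" by (simp add: minus_div_mult_eq_mod)
    show ?thesis
    proof (cases "a mod c = 0")
      case True
      obtain ws1 where w1: "good ws1" "\<And>a c. foldr reflL ws1 (iv a 0 c 0 0 0) = iv (a - (-1)*c) 0 c 0 0 0"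
        using opB[of "-1"] by blast
      obtain ws2 where w2: "good ws2" "\<And>a c. foldr reflL ws2 (iv a 0 c 0 0 0) = iv a 0 (c + a*(-1)) 0 0 0"
        using opC[of "-1"] by blast
      have s0: "foldr reflL wsB (iv a 0 c 0 0 0) = iv (a mod c) 0 c 0 0 0"
        unfolding am[symmetric] by (rule wB(2))
      have s1: "foldr reflL wsB (iv a 0 c 0 0 0) = iv 0 0 c 0 0 0"
        using s0 True by simp
      have s2: "foldr reflL ws1 (iv 0 0 c 0 0 0) = iv c 0 c 0 0 0"
        using w1(2)[of 0 c] by simp
      have s3: "foldr reflL ws2 (iv c 0 c 0 0 0) = iv c 0 0 0 0 0"
        using w2(2)[of c c] by simp
      have "foldr reflL (ws2 @ ws1 @ wsB) (iv a 0 c 0 0 0) = iv c 0 0 0 0 0"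
        by (simp only: foldr_append comp_def s1 s2 s3)
      moreover have "good (ws2 @ ws1 @ wsB)" using w1 w2 wB by (intro good_append)
      ultimately show ?thesis by blast
    next
      case False2: False
      define a1 where "a1 = a mod c"
      obtain ws2 where w2: "good ws2" "\<And>x y. foldr reflL ws2 (iv x 0 y 0 0 0) = iv x 0 (y + x*(-(c div a1))) 0 0 0"
        using opC[of "-(c div a1)"] by blast
      have cm: "c + a1*(-(c div a1)) = c mod a1" by (simp add: minus_mult_div_eq_mod[symmetric])
      have l1: "\<bar>a1\<bar> < \<bar>c\<bar>" unfolding a1_def using False abs_mod_less by blast
      have l2: "\<bar>c mod a1\<bar> < \<bar>a1\<bar>" using False2 abs_mod_less a1_def by blast
      have "nat \<bar>c mod a1\<bar> < N" using l1 l2 Suc.prems by linarith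
      then obtain ws3 g where w3: "good ws3" "foldr reflL ws3 (iv a1 0 (c mod a1) 0 0 0) = iv g 0 0 0 0 0"
        using Suc.IH by blast
      have s1: "foldr reflL wsB (iv a 0 c 0 0 0) = iv a1 0 c 0 0 0"
        unfolding a1_def am[symmetric] by (rule wB(2))
      have s2: "foldr reflL ws2 (iv a1 0 c 0 0 0) = iv a1 0 (c mod a1) 0 0 0"
        unfolding cm[symmetric] by (rule w2(2))
      have "foldr reflL (ws3 @ ws2 @ wsB) (iv a 0 c 0 0 0) = iv g 0 0 0 0 0"
        by (simp only: foldr_append comp_def s1 s2 w3(2))
      moreover have "good (ws3 @ ws2 @ wsB)" using w3 w2 wB by (intro good_append)
      ultimately show ?thesis by blast
    qed
  qed
qed


lemma Ints_floor: "y \<in> \<int> \<Longrightarrow> of_int \<lfloor>y\<rfloor> = (y::real)"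
  by (metis Ints_cases floor_of_int)

lemma latL_iv: "x \<in> latL \<Longrightarrow> \<exists>a b c d e f. x = iv a b c d e f"
  by (rule exI[of _ "\<lfloor>x$0\<rfloor>"], rule exI[of _ "\<lfloor>x$1\<rfloor>"], rule exI[of _ "\<lfloor>x$2\<rfloor>"],
      rule exI[of _ "\<lfloor>x$3\<rfloor>"], rule exI[of _ "\<lfloor>x$4\<rfloor>"], rule exI[of _ "\<lfloor>x$5\<rfloor>"])
     (simp add: vec6_eq latL_iff Ints_floor)

lemma good_inj: "good ws \<Longrightarrow> foldr reflL ws x = 0 \<Longrightarrow> x = 0"
  by (metis foldr_rev_inv good_nz foldr_linear linear_0)

lemma good_lat: "good ws \<Longrightarrow> x \<in> latL \<Longrightarrow> foldr reflL ws x \<in> latL"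
  by (simp add: good_def)

lemma line_to_e0:
  assumes x: "x \<in> latL" and iso: "bfL x x = 0"
  shows "\<exists>ws g. good ws \<and> foldr reflL ws x = iv g 0 0 0 0 0"
proof -
  obtain X0 X1 X2 X3 X4 X5 where xe: "x = iv X0 X1 X2 X3 X4 X5" using latL_iv[OF x] by blast
  have "X0*X1 + X1*X0 + X2*X3 + X3*X2 - 2*X4*X4 + X4*X5 + X5*X4 - 2*X5*X5 = 0"
    using iso unfolding xe bf_iv of_int_eq_0_iff .
  then have i1: "X0*X1 + X2*X3 - X4*X4 + X4*X5 - X5*X5 = 0" by (simp add: algebra_simps)
  obtain ws1 Y0 Y2 Y3 Y4 Y5 where w1: "good ws1" "foldr reflL ws1 x = iv Y0 0 Y2 Y3 Y4 Y5"
    using descL[of X1 "Suc (nat \<bar>X1\<bar>)", OF _ i1] xe by auto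
  have "bfL (iv Y0 0 Y2 Y3 Y4 Y5) (iv Y0 0 Y2 Y3 Y4 Y5) = 0"
    using good_foldr_bf[OF w1(1)] w1(2) iso by metis
  then have "Y0*0 + 0*Y0 + Y2*Y3 + Y3*Y2 - 2*Y4*Y4 + Y4*Y5 + Y5*Y4 - 2*Y5*Y5 = 0"
    unfolding bf_iv of_int_eq_0_iff .
  then have i2: "Y2*Y3 = Y4*Y4 - Y4*Y5 + Y5*Y5" by (simp add: algebra_simps)
  obtain ws2 Y2' where w2: "good ws2" "foldr reflL ws2 (iv Y0 0 Y2 Y3 Y4 Y5) = iv Y0 0 Y2' 0 0 0"
    using descM[of Y3 "Suc (nat \<bar>Y3\<bar>)" Y2 Y4 Y5 Y0 0, OF _ i2] by auto
  obtain ws3 g where w3: "good ws3" "foldr reflL ws3 (iv Y0 0 Y2' 0 0 0) = iv g 0 0 0 0 0"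
    using euclid[of Y2' "Suc (nat \<bar>Y2'\<bar>)" Y0] by auto
  have "good (ws3 @ ws2 @ ws1)" using w1 w2 w3 by (intro good_append)
  moreover have "foldr reflL (ws3 @ ws2 @ ws1) x = iv g 0 0 0 0 0"
    by (simp only: foldr_append comp_def w1(2) w2(2) w3(2))
  ultimately show ?thesis by blast
qed


lemma iv_zero_iff: "iv a b c d e f = 0 \<longleftrightarrow> a = 0 \<and> b = 0 \<and> c = 0 \<and> d = 0 \<and> e = 0 \<and> f = 0"
  by (simp add: vec6_eq)

lemma iv_e0_scale: "iv g 0 0 0 0 0 = of_int g *\<^sub>R iv 1 0 0 0 0 0"
  by (simp add: vec6_eq)

lemma plane_to_std:
  assumes x: "x \<in> latL" and y: "y \<in> latL" and xx: "bfL x x = 0" and xy: "bfL x y = 0"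
    and yy: "bfL y y = 0" and x0: "x \<noteq> 0"
  shows "\<exists>ws g W0 D. good ws \<and> g \<noteq> 0 \<and> foldr reflL ws x = iv g 0 0 0 0 0
      \<and> foldr reflL ws y = iv W0 0 D 0 0 0"
proof -
  obtain ws1 g where w1: "good ws1" "foldr reflL ws1 x = iv g 0 0 0 0 0"
    using line_to_e0[OF x xx] by blast
  have g0: "g \<noteq> 0"
  proof
    assume "g = 0"
    then have "foldr reflL ws1 x = 0" using w1(2) iv_zero_iff[of 0 0 0 0 0 0] by simp
    then show False using good_inj[OF w1(1)] x0 by blast
  qed
  obtain W0 W1 W2 W3 W4 W5 where ye: "foldr reflL ws1 y = iv W0 W1 W2 W3 W4 W5"
    using latL_iv[OF good_lat[OF w1(1) y]] by blast
  have "bfL (iv g 0 0 0 0 0) (iv W0 W1 W2 W3 W4 W5) = 0"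
    using foldr_bf[OF good_nz[OF w1(1)], of x y] xy unfolding w1(2) ye by simp
  then have "g*W1 + 0*W0 + 0*W3 + 0*W2 - 2*0*W4 + 0*W5 + 0*W4 - 2*0*W5 = 0"
    unfolding bf_iv of_int_eq_0_iff .
  then have W1: "W1 = 0" using g0 by simp
  have "bfL (iv W0 W1 W2 W3 W4 W5) (iv W0 W1 W2 W3 W4 W5) = 0"
    using foldr_bf[OF good_nz[OF w1(1)], of y y] yy unfolding ye by simp
  then have "W0*W1 + W1*W0 + W2*W3 + W3*W2 - 2*W4*W4 + W4*W5 + W5*W4 - 2*W5*W5 = 0"
    unfolding bf_iv of_int_eq_0_iff .
  then have i2: "W2*W3 = W4*W4 - W4*W5 + W5*W5" using W1 by (simp add: algebra_simps)
  obtain ws2 D where w2: "good ws2" "foldr reflL ws2 (iv 1 0 0 0 0 0) = iv 1 0 0 0 0 0"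
    "foldr reflL ws2 (iv W0 0 W2 W3 W4 W5) = iv W0 0 D 0 0 0"
    using descM[of W3 "Suc (nat \<bar>W3\<bar>)" W2 W4 W5 W0 0, OF _ i2] by auto
  have "foldr reflL ws2 (iv g 0 0 0 0 0) = iv g 0 0 0 0 0"
    by (subst (1 2) iv_e0_scale[of g]) (simp only: linear_cmul[OF foldr_linear] w2(2))
  then have "foldr reflL (ws2 @ ws1) x = iv g 0 0 0 0 0"
    by (simp only: foldr_append comp_def w1(2))
  moreover have "foldr reflL (ws2 @ ws1) y = iv W0 0 D 0 0 0"
    using w2(3) ye W1 by (simp only: foldr_append comp_def)
  moreover have "good (ws2 @ ws1)" using w1 w2 by (intro good_append)
  ultimately show ?thesis using g0 by blast
qed


lemma rat_denom: "(r::real) \<in> \<rat> \<Longrightarrow> \<exists>d::int. d > 0 \<and> of_int d * r \<in> \<int>"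
proof -
  assume "r \<in> \<rat>"
  then obtain a b :: int where "b > 0" "r = of_int a / of_int b" using Rats_cases' by metis
  then show ?thesis by (intro exI[of _ b]) simp
qed

lemma rat_scale: "x \<in> ratL \<Longrightarrow> \<exists>n::int. n \<noteq> 0 \<and> of_int n *\<^sub>R x \<in> latL"
proof -
  assume x: "x \<in> ratL"
  have "\<forall>i. \<exists>d::int. d > 0 \<and> of_int d * x$i \<in> \<int>"
    using x rat_denom by (auto simp: ratL_def)
  then obtain D where D: "\<And>i. D i > 0" "\<And>i. of_int (D i) * x$i \<in> \<int>" by metis
  define n where "n = (\<Prod>i\<in>UNIV. D i)"
  have n0: "n > 0" unfolding n_def using D(1) by (simp add: prod_pos)
  have "(of_int n *\<^sub>R x) $ i \<in> \<int>" for i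
  proof -
    have "n = (\<Prod>j\<in>UNIV - {i}. D j) * D i" unfolding n_def by (subst prod.remove[of _ i]) simp_all
    then have "(of_int n *\<^sub>R x) $ i = of_int (\<Prod>j\<in>UNIV - {i}. D j) * (of_int (D i) * x$i)"
      by (simp only: vector_scaleR_component real_scaleR_def of_int_mult mult.assoc)
    moreover have "of_int (\<Prod>j\<in>UNIV - {i}. D j) * (of_int (D i) * x$i) \<in> \<int>"
      by (rule Ints_mult[OF Ints_of_int D(2)])
    ultimately show ?thesis by (simp only:)
  qed
  then show ?thesis using n0 by (intro exI[of _ n]) (simp add: latL_def)
qed

lemma line_image: "linear (F :: real^6 \<Rightarrow> real^6) \<Longrightarrow> F ` {c *\<^sub>R v | c. c \<in> \<rat>} = {c *\<^sub>R F v | c. c \<in> \<rat>}"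
proof (intro set_eqI iffI)
  fix z assume "linear F" "z \<in> F ` {c *\<^sub>R v | c. c \<in> \<rat>}"
  then show "z \<in> {c *\<^sub>R F v | c. c \<in> \<rat>}" by (auto simp: linear_cmul)
next
  fix z assume l: "linear F" and "z \<in> {c *\<^sub>R F v | c. c \<in> \<rat>}"
  then obtain c where c: "c \<in> \<rat>" "z = c *\<^sub>R F v" by blast
  then have "z = F (c *\<^sub>R v)" using l by (simp add: linear_cmul)
  then show "z \<in> F ` {c *\<^sub>R v | c. c \<in> \<rat>}" using c by blast
qed

lemma line_rescale:
  fixes u :: "real^6"
  assumes r: "r \<in> \<rat>" "r \<noteq> 0"
  shows "{c *\<^sub>R (r *\<^sub>R u) | c. c \<in> \<rat>} = {c *\<^sub>R u | c. c \<in> \<rat>}"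
proof (intro set_eqI iffI)
  fix z assume "z \<in> {c *\<^sub>R (r *\<^sub>R u) | c. c \<in> \<rat>}"
  then obtain c where "c \<in> \<rat>" "z = c *\<^sub>R (r *\<^sub>R u)" by blast
  then show "z \<in> {c *\<^sub>R u | c. c \<in> \<rat>}" using r by (intro CollectI exI[of _ "c * r"]) simp
next
  fix z assume "z \<in> {c *\<^sub>R u | c. c \<in> \<rat>}"
  then obtain c where "c \<in> \<rat>" "z = c *\<^sub>R u" by blast
  then show "z \<in> {c *\<^sub>R (r *\<^sub>R u) | c. c \<in> \<rat>}" using r
    by (intro CollectI exI[of _ "c / r"]) (simp add: scaleR_scaleR)
qed

lemma plane_image: "linear (F :: real^6 \<Rightarrow> real^6) \<Longrightarrow> F ` {a *\<^sub>R v + b *\<^sub>R w | a b. a \<in> \<rat> \<and> b \<in> \<rat>}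
   = {a *\<^sub>R F v + b *\<^sub>R F w | a b. a \<in> \<rat> \<and> b \<in> \<rat>}"
proof (intro set_eqI iffI)
  fix z assume "linear F" "z \<in> F ` {a *\<^sub>R v + b *\<^sub>R w | a b. a \<in> \<rat> \<and> b \<in> \<rat>}"
  then obtain a b where ab: "a \<in> \<rat>" "b \<in> \<rat>" "z = F (a *\<^sub>R v + b *\<^sub>R w)" by blast
  then have "z = a *\<^sub>R F v + b *\<^sub>R F w" using \<open>linear F\<close> by (simp add: linear_cmul linear_add)
  then show "z \<in> {a *\<^sub>R F v + b *\<^sub>R F w | a b. a \<in> \<rat> \<and> b \<in> \<rat>}" using ab by blast
next
  fix z assume l: "linear F" and "z \<in> {a *\<^sub>R F v + b *\<^sub>R F w | a b. a \<in> \<rat> \<and> b \<in> \<rat>}"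
  then obtain a b where c: "a \<in> \<rat>" "b \<in> \<rat>" "z = a *\<^sub>R F v + b *\<^sub>R F w" by blast
  then have "z = F (a *\<^sub>R v + b *\<^sub>R w)" using l by (simp add: linear_cmul linear_add)
  then show "z \<in> F ` {a *\<^sub>R v + b *\<^sub>R w | a b. a \<in> \<rat> \<and> b \<in> \<rat>}" using c by blast
qed

lemma plane_rescale:
  fixes p q :: "real^6"
  assumes q: "al \<in> \<rat>" "be \<in> \<rat>" "de \<in> \<rat>" "al \<noteq> 0" "de \<noteq> 0"
  shows "{a *\<^sub>R (al *\<^sub>R p) + b *\<^sub>R (be *\<^sub>R p + de *\<^sub>R q) | a b. a \<in> \<rat> \<and> b \<in> \<rat>}
       = {a *\<^sub>R p + b *\<^sub>R q | a b. a \<in> \<rat> \<and> b \<in> \<rat>}"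
proof (intro set_eqI iffI)
  fix z assume "z \<in> {a *\<^sub>R (al *\<^sub>R p) + b *\<^sub>R (be *\<^sub>R p + de *\<^sub>R q) | a b. a \<in> \<rat> \<and> b \<in> \<rat>}"
  then obtain a b where ab: "a \<in> \<rat>" "b \<in> \<rat>" "z = a *\<^sub>R (al *\<^sub>R p) + b *\<^sub>R (be *\<^sub>R p + de *\<^sub>R q)" by blast
  have "z = (a*al + b*be) *\<^sub>R p + (b*de) *\<^sub>R q" using ab(3) by (simp add: algebra_simps scaleR_scaleR)
  moreover have "a*al + b*be \<in> \<rat>" "b*de \<in> \<rat>" using ab q by simp_all
  ultimately show "z \<in> {a *\<^sub>R p + b *\<^sub>R q | a b. a \<in> \<rat> \<and> b \<in> \<rat>}" by blast
next
  fix z assume "z \<in> {a *\<^sub>R p + b *\<^sub>R q | a b. a \<in> \<rat> \<and> b \<in> \<rat>}"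
  then obtain a b where ab: "a \<in> \<rat>" "b \<in> \<rat>" "z = a *\<^sub>R p + b *\<^sub>R q" by blast
  define b' where "b' = b / de"
  define a' where "a' = (a - b' * be) / al"
  have "z = a' *\<^sub>R (al *\<^sub>R p) + b' *\<^sub>R (be *\<^sub>R p + de *\<^sub>R q)"
    using ab(3) q by (simp add: vec_eq_iff a'_def b'_def field_simps)
  moreover have "a' \<in> \<rat>" "b' \<in> \<rat>" using ab q by (simp_all add: a'_def b'_def)
  ultimately show "z \<in> {a *\<^sub>R (al *\<^sub>R p) + b *\<^sub>R (be *\<^sub>R p + de *\<^sub>R q) | a b. a \<in> \<rat> \<and> b \<in> \<rat>}"
    by blast
qed


lemma good_trans:
  assumes g1: "good ws1" and g2: "good ws2" and s1: "foldr reflL ws1 ` S1 = T" and s2: "foldr reflL ws2 ` S2 = T"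
  shows "\<exists>g\<in>OtildePlusL. act g S1 = S2"
proof -
  let ?ws = "rev ws2 @ ws1"
  have g: "good ?ws" by (intro good_append good_rev g1 g2)
  have "act (matrix (foldr reflL ?ws)) S1 = foldr reflL ?ws ` S1"
    unfolding act_def good_matrix_vec ..
  also have "\<dots> = foldr reflL (rev ws2) ` (foldr reflL ws1 ` S1)"
    by (simp add: image_comp foldr_append)
  also have "\<dots> = foldr reflL (rev ws2) ` (foldr reflL ws2 ` S2)" using s1 s2 by simp
  also have "\<dots> = S2" using foldr_rev_inv[OF good_nz[OF g2]] by (simp add: image_comp comp_def)
  finally show ?thesis using good_matrix[OF g] by blast
qed

lemma line_good:
  assumes "iso_line l"
  shows "\<exists>ws. good ws \<and> foldr reflL ws ` l = {c *\<^sub>R iv 1 0 0 0 0 0 | c. c \<in> \<rat>}"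
proof -
  obtain v where v: "v \<in> ratL" "v \<noteq> 0" "bfL v v = 0" "l = {c *\<^sub>R v | c. c \<in> \<rat>}"
    using assms by (auto simp: iso_line_def)
  obtain n where n: "n \<noteq> 0" "of_int n *\<^sub>R v \<in> latL" using rat_scale[OF v(1)] by blast
  let ?x = "of_int n *\<^sub>R v"
  have xx: "bfL ?x ?x = 0" using v(3) by (simp add: bfL_lin)
  have x0: "?x \<noteq> 0" using n(1) v(2) by simp
  obtain ws g where w: "good ws" "foldr reflL ws ?x = iv g 0 0 0 0 0"
    using line_to_e0[OF n(2) xx] by blast
  have g0: "g \<noteq> 0"
  proof
    assume "g = 0"
    then have "foldr reflL ws ?x = 0" using w(2) iv_zero_iff[of 0 0 0 0 0 0] by simp
    then show False using good_inj[OF w(1)] x0 by blast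
  qed
  have lin: "linear (foldr reflL ws)" by (rule foldr_linear)
  have "of_int n *\<^sub>R foldr reflL ws v = of_int g *\<^sub>R iv 1 0 0 0 0 0"
    using w(2) iv_e0_scale[of g] linear_cmul[OF lin, of "of_int n" v] by simp
  then have fv: "foldr reflL ws v = (of_int g / of_int n) *\<^sub>R iv 1 0 0 0 0 0"
    using n(1) by (simp add: field_simps vec_eq_iff)
  have "foldr reflL ws ` l = {c *\<^sub>R ((of_int g / of_int n) *\<^sub>R iv 1 0 0 0 0 0) | c. c \<in> \<rat>}"
    unfolding v(4) line_image[OF lin] fv ..
  also have "\<dots> = {c *\<^sub>R iv 1 0 0 0 0 0 | c. c \<in> \<rat>}"
    by (rule line_rescale) (use n(1) g0 in simp_all)
  finally show ?thesis using w(1) by blast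
qed


lemma plane_good:
  assumes "tot_iso_plane P"
  shows "\<exists>ws. good ws \<and> foldr reflL ws ` P =
    {a *\<^sub>R iv 1 0 0 0 0 0 + b *\<^sub>R iv 0 0 1 0 0 0 | a b. a \<in> \<rat> \<and> b \<in> \<rat>}"
proof -
  obtain v w where v: "v \<in> ratL" "w \<in> ratL"
    and ind: "\<forall>a\<in>\<rat>. \<forall>b\<in>\<rat>. a *\<^sub>R v + b *\<^sub>R w = 0 \<longrightarrow> a = 0 \<and> b = 0"
    and iso: "bfL v v = 0" "bfL v w = 0" "bfL w w = 0"
    and P: "P = {a *\<^sub>R v + b *\<^sub>R w | a b. a \<in> \<rat> \<and> b \<in> \<rat>}"
    using assms unfolding tot_iso_plane_def by blast
  obtain n where n: "n \<noteq> 0" "of_int n *\<^sub>R v \<in> latL" using rat_scale[OF v(1)] by blast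
  obtain m where m: "m \<noteq> 0" "of_int m *\<^sub>R w \<in> latL" using rat_scale[OF v(2)] by blast
  let ?x = "of_int n *\<^sub>R v" and ?y = "of_int m *\<^sub>R w"
  have v0: "v \<noteq> 0" using ind by (metis Rats_1 Rats_0 add_0 scaleR_one scaleR_zero_left one_neq_zero)
  have x0: "?x \<noteq> 0" using n(1) v0 by simp
  have xx: "bfL ?x ?x = 0" "bfL ?x ?y = 0" "bfL ?y ?y = 0" using iso by (simp_all add: bfL_lin)
  obtain ws g W0 D where w: "good ws" "g \<noteq> 0" "foldr reflL ws ?x = iv g 0 0 0 0 0"
      "foldr reflL ws ?y = iv W0 0 D 0 0 0"
    using plane_to_std[OF n(2) m(2) xx x0] by blast
  let ?F = "foldr reflL ws"
  have lin: "linear ?F" by (rule foldr_linear)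
  have fx: "of_int n *\<^sub>R ?F v = of_int g *\<^sub>R iv 1 0 0 0 0 0"
    using w(3) iv_e0_scale[of g] linear_cmul[OF lin, of "of_int n" v] by simp
  then have fv: "?F v = (of_int g / of_int n) *\<^sub>R iv 1 0 0 0 0 0"
    using n(1) by (simp add: field_simps vec_eq_iff)
  have ye: "iv W0 0 D 0 0 0 = of_int W0 *\<^sub>R iv 1 0 0 0 0 0 + of_int D *\<^sub>R iv 0 0 1 0 0 0"
    by (simp add: vec6_eq)
  have fy: "of_int m *\<^sub>R ?F w = of_int W0 *\<^sub>R iv 1 0 0 0 0 0 + of_int D *\<^sub>R iv 0 0 1 0 0 0"
    using w(4) ye linear_cmul[OF lin, of "of_int m" w] by simp
  then have fw: "?F w = (of_int W0 / of_int m) *\<^sub>R iv 1 0 0 0 0 0 + (of_int D / of_int m) *\<^sub>R iv 0 0 1 0 0 0"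
    using m(1) by (simp add: field_simps vec_eq_iff)
  have D0: "D \<noteq> 0"
  proof
    assume D: "D = 0"
    let ?z = "?y - (of_int W0 / of_int g) *\<^sub>R ?x"
    have "?F ?z = ?F ?y - (of_int W0 / of_int g) *\<^sub>R ?F ?x"
      by (simp only: linear_diff[OF lin, of ?y "(of_int W0 / of_int g) *\<^sub>R ?x"]
          linear_cmul[OF lin, of "of_int W0 / of_int g" ?x])
    also have "\<dots> = 0" unfolding w(3) w(4) D using w(2) by (simp add: vec6_eq)
    finally have "?F ?z = 0" .
    then have "?z = 0" by (rule good_inj[OF w(1)])
    then have "(- (of_int W0 / of_int g * of_int n)) *\<^sub>R v + of_int m *\<^sub>R w = 0"
      by (simp add: algebra_simps)
    moreover have "- (of_int W0 / of_int g * of_int n) \<in> \<rat>" "(of_int m :: real) \<in> \<rat>" by simp_all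
    ultimately have "(of_int m :: real) = 0" using ind by blast
    then show False using m(1) by simp
  qed
  have "?F ` P = {a *\<^sub>R ?F v + b *\<^sub>R ?F w | a b. a \<in> \<rat> \<and> b \<in> \<rat>}"
    unfolding P by (rule plane_image[OF lin])
  also have "\<dots> = {a *\<^sub>R iv 1 0 0 0 0 0 + b *\<^sub>R iv 0 0 1 0 0 0 | a b. a \<in> \<rat> \<and> b \<in> \<rat>}"
    unfolding fv fw by (rule plane_rescale) (use n(1) m(1) w(2) D0 in simp_all)
  finally show ?thesis using w(1) by blast
qed


lemma int_matrix_vec: "int_matrix M \<Longrightarrow> y \<in> latL \<Longrightarrow> M *v y \<in> latL"
  unfolding latL_def int_matrix_def matrix_vector_mult_def
  by (auto intro!: Ints_sum Ints_mult)

lemma int_matrix_mult: "int_matrix A \<Longrightarrow> int_matrix B \<Longrightarrow> int_matrix (A ** B)"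
  unfolding int_matrix_def matrix_matrix_mult_def
  by (auto intro!: Ints_sum Ints_mult)

lemma OL_dual:
  assumes g: "g \<in> OL" and v: "v \<in> dualL"
  shows "g *v v \<in> dualL"
proof -
  obtain h where h: "int_matrix h" "g ** h = mat 1" and ig: "\<forall>x y. bfL (g *v x) (g *v y) = bfL x y"
    using g by (auto simp: OL_def)
  have "bfL (g *v v) y \<in> \<int>" if y: "y \<in> latL" for y
  proof -
    have "g *v (h *v y) = y" by (simp add: matrix_vector_mul_assoc h(2))
    then have "bfL (g *v v) y = bfL v (h *v y)" using ig by metis
    then show ?thesis using v int_matrix_vec[OF h(1) y] by (simp add: dualL_def)
  qed
  then show ?thesis by (simp add: dualL_def)
qed

lemma G_mult:
  assumes g: "g \<in> OtildePlusL" and h: "h \<in> OtildePlusL"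
  shows "g ** h \<in> OtildePlusL"
proof -
  have gO: "g \<in> OL" and hO: "h \<in> OL" using g h by (auto simp: OtildePlusL_def OtildeL_def)
  obtain g' where g': "int_matrix g" "int_matrix g'" "g ** g' = mat 1" "g' ** g = mat 1"
      "\<forall>x y. bfL (g *v x) (g *v y) = bfL x y" using gO by (auto simp: OL_def)
  obtain h' where h': "int_matrix h" "int_matrix h'" "h ** h' = mat 1" "h' ** h = mat 1"
      "\<forall>x y. bfL (h *v x) (h *v y) = bfL x y" using hO by (auto simp: OL_def)
  have inv1: "(g ** h) ** (h' ** g') = mat 1"
    by (metis g'(3) h'(3) matrix_mul_assoc matrix_mul_rid)
  have inv2: "(h' ** g') ** (g ** h) = mat 1"
    by (metis g'(4) h'(4) matrix_mul_assoc matrix_mul_rid)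
  have "g ** h \<in> OL" unfolding OL_def
    using int_matrix_mult[OF g'(1) h'(1)] int_matrix_mult[OF h'(2) g'(2)] inv1 inv2 g'(5) h'(5)
    by (auto simp: matrix_vector_mul_assoc[symmetric])
  moreover have "\<forall>v\<in>dualL. (g ** h) *v v - v \<in> latL"
  proof
    fix v assume v: "v \<in> dualL"
    have hv: "h *v v \<in> dualL" by (rule OL_dual[OF hO v])
    have a: "g *v (h *v v) - h *v v \<in> latL" using g hv by (simp add: OtildePlusL_def OtildeL_def)
    have b: "h *v v - v \<in> latL" using h v by (simp add: OtildePlusL_def OtildeL_def)
    have "(g ** h) *v v - v = (g *v (h *v v) - h *v v) + (h *v v - v)"
      by (simp add: matrix_vector_mul_assoc)
    then show "(g ** h) *v v - v \<in> latL" using latL_add[OF a b] by simp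
  qed
  moreover have "spinor_norm_one (g ** h)"
  proof -
    obtain ws1 where w1: "\<forall>w\<in>set ws1. bfL w w \<noteq> 0" "\<forall>x. g *v x = foldr reflL ws1 x"
      "prod_list (map (\<lambda>w. - bfL w w / 2) ws1) > 0"
      using g by (auto simp: OtildePlusL_def spinor_norm_one_def)
    obtain ws2 where w2: "\<forall>w\<in>set ws2. bfL w w \<noteq> 0" "\<forall>x. h *v x = foldr reflL ws2 x"
      "prod_list (map (\<lambda>w. - bfL w w / 2) ws2) > 0"
      using h by (auto simp: OtildePlusL_def spinor_norm_one_def)
    show ?thesis unfolding spinor_norm_one_def
      by (rule exI[of _ "ws1 @ ws2"])
         (use w1 w2 in \<open>auto simp: matrix_vector_mul_assoc[symmetric]\<close>)
  qed
  ultimately show ?thesis by (simp add: OtildePlusL_def OtildeL_def)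
qed

lemma act_mult: "act g (act h S) = act (g ** h) S"
  by (simp add: act_def image_comp comp_def matrix_vector_mul_assoc)

lemma mat1_G: "mat 1 \<in> OtildePlusL"
proof -
  have "matrix (foldr reflL []) \<in> OtildePlusL" by (rule good_matrix[OF good_Nil])
  moreover have "foldr reflL [] = id" by (simp add: fun_eq_iff)
  ultimately show ?thesis by (simp add: matrix_id_mat_1)
qed


lemma orbit_eq:
  assumes tr: "\<forall>a b. X a \<and> X b \<longrightarrow> (\<exists>g\<in>OtildePlusL. act g a = b)" and a: "X a" and b: "X b"
  shows "orbitG OtildePlusL a = orbitG OtildePlusL b"
proof -
  have sub: "orbitG OtildePlusL a \<subseteq> orbitG OtildePlusL b" if xab: "X a" "X b" for a b
  proof
    fix z assume "z \<in> orbitG OtildePlusL a"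
    then obtain g where g: "g \<in> OtildePlusL" "z = act g a" by (auto simp: orbitG_def)
    obtain h where h: "h \<in> OtildePlusL" "act h b = a" using tr xab by blast
    have "z = act (g ** h) b" using g(2) h(2) act_mult[of g h b] by simp
    moreover have "g ** h \<in> OtildePlusL" by (rule G_mult[OF g(1) h(1)])
    ultimately show "z \<in> orbitG OtildePlusL b" by (auto simp: orbitG_def)
  qed
  show ?thesis using sub[OF a b] sub[OF b a] by blast
qed

lemma const_image: "x \<in> A \<Longrightarrow> (\<forall>y\<in>A. f y = f x) \<Longrightarrow> f ` A = {f x}"
  by blast

theorem mainTheorem9:
  shows "(\<forall>l1 l2. iso_line l1 \<and> iso_line l2 \<longrightarrow> (\<exists>g\<in>OtildePlusL. act g l1 = l2))
       \<and> (\<forall>P1 P2. tot_iso_plane P1 \<and> tot_iso_plane P2 \<longrightarrow> (\<exists>g\<in>OtildePlusL. act g P1 = P2))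
       \<and> (\<exists>NL NP. line_nodes OtildePlusL = {NL} \<and> plane_nodes OtildePlusL = {NP}
                 \<and> building_edges OtildePlusL = {(NL, NP)})"
proof -
  have T1: "\<forall>l1 l2. iso_line l1 \<and> iso_line l2 \<longrightarrow> (\<exists>g\<in>OtildePlusL. act g l1 = l2)"
  proof (intro allI impI)
    fix l1 l2 assume h: "iso_line l1 \<and> iso_line l2"
    obtain ws1 where w1: "good ws1" "foldr reflL ws1 ` l1 = {c *\<^sub>R iv 1 0 0 0 0 0 | c. c \<in> \<rat>}"
      using line_good h by blast
    obtain ws2 where w2: "good ws2" "foldr reflL ws2 ` l2 = {c *\<^sub>R iv 1 0 0 0 0 0 | c. c \<in> \<rat>}"
      using line_good h by blast
    show "\<exists>g\<in>OtildePlusL. act g l1 = l2" by (rule good_trans[OF w1(1) w2(1) w1(2) w2(2)])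
  qed
  have T2: "\<forall>P1 P2. tot_iso_plane P1 \<and> tot_iso_plane P2 \<longrightarrow> (\<exists>g\<in>OtildePlusL. act g P1 = P2)"
  proof (intro allI impI)
    fix P1 P2 assume h: "tot_iso_plane P1 \<and> tot_iso_plane P2"
    obtain ws1 where w1: "good ws1"
      "foldr reflL ws1 ` P1 = {a *\<^sub>R iv 1 0 0 0 0 0 + b *\<^sub>R iv 0 0 1 0 0 0 | a b. a \<in> \<rat> \<and> b \<in> \<rat>}"
      using plane_good h by blast
    obtain ws2 where w2: "good ws2"
      "foldr reflL ws2 ` P2 = {a *\<^sub>R iv 1 0 0 0 0 0 + b *\<^sub>R iv 0 0 1 0 0 0 | a b. a \<in> \<rat> \<and> b \<in> \<rat>}"
      using plane_good h by blast
    show "\<exists>g\<in>OtildePlusL. act g P1 = P2" by (rule good_trans[OF w1(1) w2(1) w1(2) w2(2)])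
  qed
  define L0 where "L0 = {c *\<^sub>R iv 1 0 0 0 0 0 | c. c \<in> \<rat>}"
  define P0 where "P0 = {a *\<^sub>R iv 1 0 0 0 0 0 + b *\<^sub>R iv 0 0 1 0 0 0 | a b. a \<in> \<rat> \<and> b \<in> \<rat>}"
  have rat1: "iv 1 0 0 0 0 0 \<in> ratL" "iv 0 0 1 0 0 0 \<in> ratL"
    by (simp_all add: ratL_def all6)
  have l0: "iso_line L0" unfolding iso_line_def L0_def
    using rat1 by (intro bexI[of _ "iv 1 0 0 0 0 0"]) (simp_all add: bfL_def vec6_eq)
  have p0: "tot_iso_plane P0" unfolding tot_iso_plane_def P0_def
    using rat1 by (intro bexI[of _ "iv 1 0 0 0 0 0"] bexI[of _ "iv 0 0 1 0 0 0"])
      (simp_all add: bfL_def vec6_eq)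
  have LN: "line_nodes OtildePlusL = {orbitG OtildePlusL L0}"
    unfolding line_nodes_def
  proof (rule const_image)
    show "L0 \<in> {l. iso_line l}" using l0 by simp
    show "\<forall>y\<in>{l. iso_line l}. orbitG OtildePlusL y = orbitG OtildePlusL L0"
      using orbit_eq[OF T1 _ l0] by blast
  qed
  have PN: "plane_nodes OtildePlusL = {orbitG OtildePlusL P0}"
    unfolding plane_nodes_def
  proof (rule const_image)
    show "P0 \<in> {P. tot_iso_plane P}" using p0 by simp
    show "\<forall>y\<in>{P. tot_iso_plane P}. orbitG OtildePlusL y = orbitG OtildePlusL P0"
      using orbit_eq[OF T2 _ p0] by blast
  qed
  have BE: "building_edges OtildePlusL = {(orbitG OtildePlusL L0, orbitG OtildePlusL P0)}"
  proof (intro set_eqI iffI)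
    fix z assume "z \<in> building_edges OtildePlusL"
    then obtain l P where lp: "z = (orbitG OtildePlusL l, orbitG OtildePlusL P)" "iso_line l" "tot_iso_plane P"
      unfolding building_edges_def by blast
    have "orbitG OtildePlusL l = orbitG OtildePlusL L0" by (rule orbit_eq[OF T1 lp(2) l0])
    moreover have "orbitG OtildePlusL P = orbitG OtildePlusL P0" by (rule orbit_eq[OF T2 lp(3) p0])
    ultimately show "z \<in> {(orbitG OtildePlusL L0, orbitG OtildePlusL P0)}" using lp(1) by simp
  next
    fix z assume z: "z \<in> {(orbitG OtildePlusL L0, orbitG OtildePlusL P0)}"
    have "act (mat 1) L0 \<subseteq> P0"
    proof
      fix y assume "y \<in> act (mat 1) L0"
      then obtain c where c: "c \<in> \<rat>" "y = c *\<^sub>R iv 1 0 0 0 0 0"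
        unfolding act_def L0_def by auto
      then have "y = c *\<^sub>R iv 1 0 0 0 0 0 + 0 *\<^sub>R iv 0 0 1 0 0 0" by simp
      then show "y \<in> P0" unfolding P0_def using c(1) Rats_0 by blast
    qed
    then show "z \<in> building_edges OtildePlusL" using z l0 p0 mat1_G
      unfolding building_edges_def by blast
  qed
  show ?thesis using T1 T2 LN PN BE by blast
qed

end
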